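(* Let $X$ be a finite graded poset and let $f\colon X\to\mathbb R$ be a Morse function satisfying the Exclusion condition. Then there exists an order preserving Morse function $f'\colon X\to\mathbb R$ (i.e. $x\le y\Rightarrow f'(x)\le f'(y)$) satisfying the Exclusion condition and having the same associated Morse matching as $f$, i.e. $\mathcal M_{f'}=\mathcal M_f$.
   Context: In a poset, write $a\prec b$ if $a<b$ and there is no $c$ with $a<c<b$. A chain $x_0<\dots<x_n$ has length $n$; a poset is homogeneous of degree $n$ if all its maximal chains have length $n$; $X$ is graded if $U_x=\{y:y\le x\}$ is homogeneous for every $x$. A Morse function on a finite poset $X$ is a map $f\colon X\to\mathbb R$ such that for every $x$, $\#\{y: x\prec y,\ f(x)\ge f(y)\}\le1$ and $\#\{w: w\prec x,\ f(w)\ge f(x)\}\le 1$; $x$ is critical if both sets are empty, regular otherwise. $f$ satisfies the Exclusion condition if for every regular $x$ exactly one of these two sets is nonempty. The associated matching is $\mathcal M_f=\{(w,x): w\prec x,\ f(w)\ge f(x)\}$. *)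

theory Defs
  imports Complex_Main
begin

text \<open>A (finite) poset is modelled as a carrier set X of a type with a partial order;
  the order on X is the restriction of the ambient order.\<close>

definition covers :: "'a::order set \<Rightarrow> 'a \<Rightarrow> 'a \<Rightarrow> bool" where
  "covers X a b \<longleftrightarrow> a \<in> X \<and> b \<in> X \<and> a < b \<and> \<not> (\<exists>c\<in>X. a < c \<and> c < b)"

definition is_chain :: "'a::order set \<Rightarrow> 'a list \<Rightarrow> bool" where
  "is_chain S xs \<longleftrightarrow> xs \<noteq> [] \<and> set xs \<subseteq> S \<and> sorted_wrt (<) xs"

definition chain_length :: "'a list \<Rightarrow> nat" where
  "chain_length xs = length xs - 1"

definition maximal_chain :: "'a::order set \<Rightarrow> 'a list \<Rightarrow> bool" where
  "maximal_chain S xs \<longleftrightarrow> is_chain S xs \<and>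
     (\<forall>ys. is_chain S ys \<and> set xs \<subseteq> set ys \<longrightarrow> set ys = set xs)"

definition homogeneous_of_degree :: "'a::order set \<Rightarrow> nat \<Rightarrow> bool" where
  "homogeneous_of_degree S n \<longleftrightarrow> (\<forall>xs. maximal_chain S xs \<longrightarrow> chain_length xs = n)"

definition homogeneous :: "'a::order set \<Rightarrow> bool" where
  "homogeneous S \<longleftrightarrow> (\<exists>n. homogeneous_of_degree S n)"

definition down_set :: "'a::order set \<Rightarrow> 'a \<Rightarrow> 'a set" where
  "down_set X x = {y \<in> X. y \<le> x}"

definition graded :: "'a::order set \<Rightarrow> bool" where
  "graded X \<longleftrightarrow> (\<forall>x\<in>X. homogeneous (down_set X x))"

definition up_low :: "'a::order set \<Rightarrow> ('a \<Rightarrow> real) \<Rightarrow> 'a \<Rightarrow> 'a set" where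
  "up_low X f x = {y. covers X x y \<and> f x \<ge> f y}"

definition down_high :: "'a::order set \<Rightarrow> ('a \<Rightarrow> real) \<Rightarrow> 'a \<Rightarrow> 'a set" where
  "down_high X f x = {w. covers X w x \<and> f w \<ge> f x}"

definition morse_function :: "'a::order set \<Rightarrow> ('a \<Rightarrow> real) \<Rightarrow> bool" where
  "morse_function X f \<longleftrightarrow>
     (\<forall>x\<in>X. card (up_low X f x) \<le> 1 \<and> card (down_high X f x) \<le> 1)"

definition critical :: "'a::order set \<Rightarrow> ('a \<Rightarrow> real) \<Rightarrow> 'a \<Rightarrow> bool" where
  "critical X f x \<longleftrightarrow> up_low X f x = {} \<and> down_high X f x = {}"

definition exclusion_condition :: "'a::order set \<Rightarrow> ('a \<Rightarrow> real) \<Rightarrow> bool" where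
  "exclusion_condition X f \<longleftrightarrow>
     (\<forall>x\<in>X. \<not> critical X f x \<longrightarrow>
        ((up_low X f x \<noteq> {}) \<noteq> (down_high X f x \<noteq> {})))"

definition morse_matching :: "'a::order set \<Rightarrow> ('a \<Rightarrow> real) \<Rightarrow> ('a \<times> 'a) set" where
  "morse_matching X f = {(w, x). covers X w x \<and> f w \<ge> f x}"

end

theory Submission
  imports Defs
begin

lemma sorted_lt_distinct: "sorted_wrt (<) (xs::'a::order list) \<Longrightarrow> distinct xs"
  by (induction xs) auto

lemma sorted_lt_comparable:
  "sorted_wrt (<) (xs::'a::order list) \<Longrightarrow> u \<in> set xs \<Longrightarrow> v \<in> set xs \<Longrightarrow> u < v \<or> u = v \<or> v < u"
  by (induction xs) auto

lemma exists_maximal_chain: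
  fixes S :: "'a::order set"
  assumes "finite S" "x \<in> S"
  shows "\<exists>xs. maximal_chain S xs"
proof -
  let ?P = "\<lambda>n. \<exists>xs. is_chain S xs \<and> length xs = n"
  have "?P 1" using assms by (intro exI[of _ "[x]"]) (auto simp: is_chain_def)
  moreover have "\<forall>n. ?P n \<longrightarrow> n \<le> card S"
  proof (intro allI impI)
    fix n assume "?P n"
    then obtain xs where "is_chain S xs" "length xs = n" by blast
    then have "distinct xs" "set xs \<subseteq> S" by (auto simp: is_chain_def sorted_lt_distinct)
    then show "n \<le> card S" using \<open>length xs = n\<close> assms(1)
      by (metis card_mono distinct_card)
  qed
  ultimately obtain n where n: "?P n" "\<forall>m. ?P m \<longrightarrow> m \<le> n"
    using Nat.ex_has_greatest_nat[of ?P 1 "card S"] by blast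
  then obtain xs where xs: "is_chain S xs" "length xs = n" by blast
  have "maximal_chain S xs"
    unfolding maximal_chain_def
  proof (intro conjI allI impI)
    show "is_chain S xs" by fact
    fix ys assume ys: "is_chain S ys \<and> set xs \<subseteq> set ys"
    have "length ys \<le> n" using n(2) ys by blast
    have d: "distinct xs" "distinct ys" using xs ys by (auto simp: is_chain_def sorted_lt_distinct)
    have "card (set ys) \<le> card (set xs)" using d xs \<open>length ys \<le> n\<close> by (simp add: distinct_card)
    then show "set ys = set xs" using ys card_seteq[of "set ys" "set xs"] by auto
  qed
  then show ?thesis by blast
qed

definition rk :: "'a::order set \<Rightarrow> 'a \<Rightarrow> nat" where
  "rk X x = (SOME n. homogeneous_of_degree (down_set X x) n)"

lemma rk_eq:
  assumes "graded X" "x \<in> X" "maximal_chain (down_set X x) xs"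
  shows "rk X x = chain_length xs"
proof -
  obtain n where n: "homogeneous_of_degree (down_set X x) n"
    using assms unfolding graded_def homogeneous_def by blast
  have "homogeneous_of_degree (down_set X x) (rk X x)"
    unfolding rk_def using n by (rule someI)
  then show ?thesis using assms(3) unfolding homogeneous_of_degree_def by simp
qed

lemma rk_cover:
  fixes X :: "'a::order set"
  assumes fin: "finite X" and gr: "graded X" and cv: "covers X a b"
  shows "rk X b = rk X a + 1"
proof -
  have aX: "a \<in> X" and bX: "b \<in> X" and ab: "a < b"
    and nc: "\<not> (\<exists>c\<in>X. a < c \<and> c < b)" using cv by (auto simp: covers_def)
  have fa: "finite (down_set X a)" using fin by (simp add: down_set_def)
  obtain xs where xs: "maximal_chain (down_set X a) xs"
    using exists_maximal_chain[OF fa, of a] aX by (auto simp: down_set_def)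
  have xsc: "xs \<noteq> []" "set xs \<subseteq> down_set X a" "sorted_wrt (<) xs"
    using xs by (auto simp: maximal_chain_def is_chain_def)
  have ain: "a \<in> set xs"
  proof (rule ccontr)
    assume na: "a \<notin> set xs"
    have "is_chain (down_set X a) (xs @ [a])"
      unfolding is_chain_def using xsc na aX
      by (auto simp: sorted_wrt_append down_set_def order_le_less)
    moreover have "set xs \<subseteq> set (xs @ [a])" by auto
    ultimately have "set (xs @ [a]) = set xs"
      using xs unfolding maximal_chain_def by blast
    then show False using na by auto
  qed
  let ?zs = "xs @ [b]"
  have zsc: "is_chain (down_set X b) ?zs"
    unfolding is_chain_def using xsc ab bX
    by (auto simp: sorted_wrt_append down_set_def intro: le_less_trans)
  have "maximal_chain (down_set X b) ?zs"
    unfolding maximal_chain_def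
  proof (intro conjI allI impI)
    show "is_chain (down_set X b) ?zs" by fact
    fix ys assume ys: "is_chain (down_set X b) ys \<and> set ?zs \<subseteq> set ys"
    let ?ys' = "filter (\<lambda>z. z \<noteq> b) ys"
    have ysc: "set ys \<subseteq> down_set X b" "sorted_wrt (<) ys" using ys by (auto simp: is_chain_def)
    have ainy: "a \<in> set ys" using ys ain by auto
    have sub: "set ?ys' \<subseteq> down_set X a"
    proof
      fix z assume z: "z \<in> set ?ys'"
      then have zy: "z \<in> set ys" "z \<noteq> b" by auto
      then have zX: "z \<in> X" "z < b" using ysc by (auto simp: down_set_def)
      have "z < a \<or> z = a \<or> a < z" using sorted_lt_comparable[OF ysc(2) zy(1) ainy] .
      then have "z \<le> a" using nc zX by auto
      then show "z \<in> down_set X a" using zX by (simp add: down_set_def)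
    qed
    have "is_chain (down_set X a) ?ys'"
      unfolding is_chain_def using sub ysc ainy ab
      by (auto simp: sorted_wrt_filter filter_empty_conv)
    moreover have "set xs \<subseteq> set ?ys'"
      using ys xsc ab by (auto simp: down_set_def)
    ultimately have "set ?ys' = set xs" using xs unfolding maximal_chain_def by blast
    moreover have "b \<in> set ys" using ys by auto
    ultimately show "set ys = set ?zs" by auto
  qed
  then have "rk X b = chain_length ?zs" using rk_eq[OF gr bX] by blast
  moreover have "rk X a = chain_length xs" using rk_eq[OF gr aX xs] .
  ultimately show ?thesis using xsc(1) by (simp add: chain_length_def)
qed

definition sq :: "real \<Rightarrow> real" where
  "sq t = t / (1 + \<bar>t\<bar>) / 4"

lemma frac_lt:
  fixes a b ca cb :: real
  assumes "0 < ca" "0 < cb" "a * cb < b * ca"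
  shows "a / ca < b / cb"
proof -
  have "a / ca = (a * cb) / (ca * cb)" using assms by simp
  also have "\<dots> < (b * ca) / (ca * cb)"
    using assms by (intro divide_strict_right_mono) simp_all
  also have "\<dots> = b / cb" using assms by simp
  finally show ?thesis .
qed

lemma sq_bounds: "- 1/4 < sq t" "sq t < 1/4"
proof -
  have pos: "0 < 1 + \<bar>t\<bar>" by simp
  define q where "q = t / (1 + \<bar>t\<bar>)"
  have "q < 1" unfolding q_def using pos_divide_less_eq[OF pos, of t 1] by simp
  moreover have "-1 < q" unfolding q_def using pos_less_divide_eq[OF pos, of "-1" t] by simp
  moreover have "sq t = q / 4" unfolding sq_def q_def by (rule refl)
  ultimately show "- 1/4 < sq t" "sq t < 1/4" by simp_all
qed

lemma sq_mono: "a < b \<Longrightarrow> sq a < sq b"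
proof -
  assume ab: "a < b"
  have e1: "a * (1 + \<bar>b\<bar>) = a + a * \<bar>b\<bar>" "b * (1 + \<bar>a\<bar>) = b + b * \<bar>a\<bar>"
    by (simp_all add: distrib_left)
  have "a * \<bar>b\<bar> \<le> b * \<bar>a\<bar>"
  proof (cases "a \<ge> 0")
    case True
    then have "\<bar>a\<bar> = a" "\<bar>b\<bar> = b" using ab by simp_all
    then show ?thesis by (simp add: mult.commute)
  next
    case False
    then have na: "\<bar>a\<bar> = - a" by simp
    show ?thesis
    proof (cases "b \<ge> 0")
      case True
      then have "\<bar>b\<bar> = b" by simp
      moreover have "a * b \<le> 0" using False True by (simp add: mult_nonpos_nonneg)
      moreover have "b * (- a) \<ge> 0" using False True by (intro mult_nonneg_nonneg) simp_all
      ultimately show ?thesis using na by simp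
    next
      case F2: False
      then have "\<bar>b\<bar> = - b" by simp
      then show ?thesis using na by (simp add: mult.commute)
    qed
  qed
  then have "a + a * \<bar>b\<bar> < b + b * \<bar>a\<bar>" by (rule add_less_le_mono[OF ab])
  then have "a * (1 + \<bar>b\<bar>) < b * (1 + \<bar>a\<bar>)" unfolding e1 .
  then have "a / (1 + \<bar>a\<bar>) < b / (1 + \<bar>b\<bar>)"
    by (intro frac_lt) simp_all
  then show ?thesis unfolding sq_def by (intro divide_strict_right_mono) auto
qed

definition fp :: "'a::order set \<Rightarrow> ('a \<Rightarrow> real) \<Rightarrow> 'a \<Rightarrow> real" where
  "fp X f x = (if up_low X f x \<noteq> {} then real (rk X x) + 1/2 + sq (f x)
     else if down_high X f x \<noteq> {} then
       real (rk X (THE w. w \<in> down_high X f x)) + 1/2 + sq (f (THE w. w \<in> down_high X f x))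
     else real (rk X x))"

lemma singleton_of:
  assumes "finite A" "card A \<le> 1" "A \<noteq> {}"
  shows "\<exists>c. A = {c}"
proof -
  have "card A \<noteq> 0" using assms(1,3) by simp
  then have "card A = 1" using assms(2) by linarith
  then show ?thesis by (rule card_1_singletonE) blast
qed

lemma up_single:
  assumes "finite X" "morse_function X f" "x \<in> X" "up_low X f x \<noteq> {}"
  shows "\<exists>c. up_low X f x = {c}"
proof -
  have "up_low X f x \<subseteq> X" by (auto simp: up_low_def covers_def)
  then have "finite (up_low X f x)" using assms(1) by (rule finite_subset)
  moreover have "card (up_low X f x) \<le> 1" using assms(2,3) unfolding morse_function_def by blast
  ultimately show ?thesis using assms(4) by (rule singleton_of)
qed

lemma down_single:
  assumes "finite X" "morse_function X f" "x \<in> X" "down_high X f x \<noteq> {}"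
  shows "\<exists>c. down_high X f x = {c}"
proof -
  have "down_high X f x \<subseteq> X" by (auto simp: down_high_def covers_def)
  then have "finite (down_high X f x)" using assms(1) by (rule finite_subset)
  moreover have "card (down_high X f x) \<le> 1" using assms(2,3) unfolding morse_function_def by blast
  ultimately show ?thesis using assms(4) by (rule singleton_of)
qed

lemma excl:
  assumes "exclusion_condition X f" "x \<in> X" "up_low X f x \<noteq> {}"
  shows "down_high X f x = {}"
  using assms unfolding exclusion_condition_def critical_def by auto

lemma cover_main:
  fixes X :: "'a::order set"
  assumes fin: "finite X" and gr: "graded X" and mo: "morse_function X f"
    and ex: "exclusion_condition X f" and cv: "covers X a b"
  shows "fp X f a \<le> fp X f b \<and> (fp X f b \<le> fp X f a \<longleftrightarrow> f b \<le> f a)"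
proof -
  have aX: "a \<in> X" and bX: "b \<in> X" using cv by (auto simp: covers_def)
  define r where "r = real (rk X a)"
  have rb: "real (rk X b) = r + 1" using rk_cover[OF fin gr cv] r_def by simp
  note sb = sq_bounds
  have bval: "fp X f b > r + 3/4 \<or> (\<exists>d. down_high X f b = {d} \<and> fp X f b = r + 1/2 + sq (f d) \<and> f d \<ge> f b)"
  proof (cases "up_low X f b \<noteq> {}")
    case True
    then have "fp X f b = r + 1 + 1/2 + sq (f b)" using rb by (simp add: fp_def)
    then show ?thesis using sb[of "f b"] by auto
  next
    case F: False
    show ?thesis
    proof (cases "down_high X f b \<noteq> {}")
      case True
      then obtain d where d: "down_high X f b = {d}" using down_single[OF fin mo bX] by blast
      then have "d \<in> down_high X f b" by simp
      then have cd: "covers X d b" "f d \<ge> f b" by (simp_all add: down_high_def)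
      have "real (rk X d) = r" using rk_cover[OF fin gr cd(1)] rb by simp
      then have "fp X f b = r + 1/2 + sq (f d)" using F d by (simp add: fp_def)
      then show ?thesis using d cd by blast
    next
      case False
      then have "fp X f b = r + 1" using F rb by (simp add: fp_def)
      then show ?thesis by auto
    qed
  qed
  show ?thesis
  proof (cases "up_low X f a \<noteq> {}")
    case La: True
    then obtain c where c: "up_low X f a = {c}" using up_single[OF fin mo aX] by blast
    have fa: "fp X f a = r + 1/2 + sq (f a)" using La r_def by (simp add: fp_def)
    have "c \<in> up_low X f a" using c by simp
    then have cc: "covers X a c" "f c \<le> f a" by (simp_all add: up_low_def)
    show ?thesis
    proof (cases "b = c")
      case True
      then have "a \<in> down_high X f b" using cc by (simp add: down_high_def)
      then obtain d where d: "down_high X f b = {d}" using down_single[OF fin mo bX] by blast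
      with \<open>a \<in> down_high X f b\<close> have da: "d = a" by auto
      have "up_low X f b = {}" using excl[OF ex bX] d by auto
      then have "fp X f b = fp X f a" using d da fa r_def by (simp add: fp_def)
      moreover have "f b \<le> f a" using cc True by simp
      ultimately show ?thesis by simp
    next
      case False
      have lt: "f a < f b"
      proof (rule ccontr)
        assume "\<not> f a < f b"
        then have "b \<in> up_low X f a" using cv by (simp add: up_low_def)
        then show False using c False by simp
      qed
      have "fp X f b > fp X f a"
        using bval
      proof
        assume "fp X f b > r + 3/4"
        then show ?thesis using fa sb[of "f a"] by simp
      next
        assume "\<exists>d. down_high X f b = {d} \<and> fp X f b = r + 1/2 + sq (f d) \<and> f d \<ge> f b"
        then obtain d where "fp X f b = r + 1/2 + sq (f d)" "f d \<ge> f b" by blast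
        then show ?thesis using fa lt sq_mono[of "f a" "f d"] by simp
      qed
      then show ?thesis using lt by simp
    qed
  next
    case Na: False
    have "fp X f a \<le> r - 1/4 \<or> fp X f a = r"
    proof (cases "down_high X f a \<noteq> {}")
      case True
      then obtain d where d: "down_high X f a = {d}" using down_single[OF fin mo aX] by blast
      then have "d \<in> down_high X f a" by simp
      then have cd: "covers X d a" by (simp add: down_high_def)
      have "real (rk X d) = r - 1" using rk_cover[OF fin gr cd(1)] r_def by simp
      then have "fp X f a = r - 1/2 + sq (f d)" using Na d by (simp add: fp_def)
      then show ?thesis using sb[of "f d"] by simp
    next
      case False
      then show ?thesis using Na r_def by (simp add: fp_def)
    qed
    moreover have "fp X f b > r + 1/4"
      using bval
    proof
      assume "\<exists>d. down_high X f b = {d} \<and> fp X f b = r + 1/2 + sq (f d) \<and> f d \<ge> f b"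
      then obtain d where "fp X f b = r + 1/2 + sq (f d)" by blast
      then show ?thesis using sb[of "f d"] by simp
    qed simp
    moreover have "\<not> f b \<le> f a"
    proof
      assume "f b \<le> f a"
      then have "b \<in> up_low X f a" using cv by (simp add: up_low_def)
      then show False using Na by simp
    qed
    moreover note calc = calculation
    have "fp X f a < fp X f b"
      using calc(1,2) by (elim disjE) linarith+
    then show ?thesis using calc(3) by simp
  qed
qed

lemma mono_from_covers:
  fixes X :: "'a::order set" and g :: "'a \<Rightarrow> real"
  assumes fin: "finite X" and cov: "\<And>a b. covers X a b \<Longrightarrow> g a \<le> g b"
  shows "x \<in> X \<Longrightarrow> y \<in> X \<Longrightarrow> x \<le> y \<Longrightarrow> g x \<le> g y"
proof (induction "card {z\<in>X. x < z \<and> z \<le> y}" arbitrary: x rule: less_induct)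
  case less
  show ?case
  proof (cases "x = y")
    case True then show ?thesis by simp
  next
    case False
    let ?S = "{z\<in>X. x < z \<and> z \<le> y}"
    have yS: "y \<in> ?S" using less.prems False by auto
    have finS: "finite ?S" using fin by simp
    obtain m where m: "m \<in> ?S" "\<forall>b\<in>?S. b \<le> m \<longrightarrow> m = b"
      using finite_has_minimal[OF finS] yS by blast
    have cxm: "covers X x m"
      unfolding covers_def
    proof (intro conjI)
      show "\<not> (\<exists>c\<in>X. x < c \<and> c < m)"
      proof
        assume "\<exists>c\<in>X. x < c \<and> c < m"
        then obtain c where c: "c \<in> X" "x < c" "c < m" by blast
        then have "c \<in> ?S" using m(1) by auto
        then show False using m(2) c by auto
      qed
      show "x \<in> X" by (rule less.prems(1))
      show "m \<in> X" "x < m" using m(1) by simp_all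
    qed
    have sub: "{z\<in>X. m < z \<and> z \<le> y} \<subset> ?S" using m(1) by auto
    then have "card {z\<in>X. m < z \<and> z \<le> y} < card ?S" using finS by (rule psubset_card_mono[rotated])
    moreover have "m \<in> X" "m \<le> y" using m(1) by auto
    ultimately have "g m \<le> g y" using less.hyps[of m] less.prems(2) by blast
    moreover have "g x \<le> g m" using cov[OF cxm] .
    ultimately show ?thesis by simp
  qed
qed

theorem mainTheorem7:
  fixes X :: "'a::order set" and f :: "'a \<Rightarrow> real"
  assumes "finite X" and "graded X"
    and "morse_function X f" and "exclusion_condition X f"
  shows "\<exists>f' :: 'a \<Rightarrow> real. (\<forall>x\<in>X. \<forall>y\<in>X. x \<le> y \<longrightarrow> f' x \<le> f' y)
           \<and> morse_function X f' \<and> exclusion_condition X f'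
           \<and> morse_matching X f' = morse_matching X f"
proof (intro exI conjI)
  let ?g = "fp X f"
  have cm: "\<And>a b. covers X a b \<Longrightarrow> ?g a \<le> ?g b \<and> (?g b \<le> ?g a \<longleftrightarrow> f b \<le> f a)"
    using cover_main[OF assms] by blast
  have cv: "\<And>a b. covers X a b \<Longrightarrow> ?g a \<le> ?g b" using cm by blast
  show "\<forall>x\<in>X. \<forall>y\<in>X. x \<le> y \<longrightarrow> ?g x \<le> ?g y"
    using mono_from_covers[of X ?g, OF assms(1) cv] by blast
  have key: "\<And>w x. (covers X w x \<and> ?g x \<le> ?g w) = (covers X w x \<and> f x \<le> f w)"
  proof -
    fix w x
    show "(covers X w x \<and> ?g x \<le> ?g w) = (covers X w x \<and> f x \<le> f w)"
    proof (cases "covers X w x")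
      case True
      then show ?thesis using cm[OF True] by simp
    qed simp
  qed
  have ul: "\<And>x. up_low X ?g x = up_low X f x"
    unfolding up_low_def key ..
  have dh: "\<And>x. down_high X ?g x = down_high X f x"
    unfolding down_high_def key ..
  show "morse_function X ?g" using assms(3) unfolding morse_function_def ul dh .
  show "exclusion_condition X ?g" using assms(4) unfolding exclusion_condition_def critical_def ul dh .
  show "morse_matching X ?g = morse_matching X f"
    unfolding morse_matching_def key ..
qed

end
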